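(* Let $X$ be a real Hilbert space, let $A,B\colon X\rightrightarrows X$, let $\mu>\omega\ge0$, and let $\gamma\in\left]0,\frac{\mu-\omega}{2\mu\omega}\right[$ (with $\gamma\in\left]0,+\infty\right[$ when $\omega=0$). Suppose that either (a) $A$ is maximally $(-\omega)$-monotone and $B$ is maximally $\mu$-monotone, or (b) $A$ is maximally $\mu$-monotone and $B$ is maximally $(-\omega)$-monotone. Set $$T=\tfrac12\big(\mathrm{Id}+R_{\gamma B}R_{\gamma A}\big),\qquad\alpha=\frac{\mu-\omega}{2(\mu-\omega-\gamma\mu\omega)}.$$ Then $T$ is single-valued with full domain, $\alpha\in\left]0,1\right[$, and $T$ is $\alpha$-averaged.
   Context: For $\rho\in\mathbb{R}$, $A\colon X\rightrightarrows X$ is $\rho$-monotone if $\langle x-y,u-v\rangle\ge\rho\|x-y\|^2$ for all $(x,u),(y,v)\in\operatorname{gra}A$, and maximally $\rho$-monotone if no proper extension of its graph is $\rho$-monotone. $J_A=(\mathrm{Id}+A)^{-1}$, $R_A=2J_A-\mathrm{Id}$. For $\alpha\in\left]0,1\right[$, $T$ is $\alpha$-averaged if $T=(1-\alpha)\mathrm{Id}+\alpha N$ for some nonexpansive ($1$-Lipschitz) $N\colon X\to X$. *)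

theory Defs
  imports "HOL-Analysis.Analysis"
begin

(* Set-valued operators X \<rightrightarrows> X are modelled as 'a \<Rightarrow> 'a set; gra A = {(x,u). u \<in> A x}. *)

definition gra :: "('a \<Rightarrow> 'a set) \<Rightarrow> ('a \<times> 'a) set" where
  "gra A = {(x, u). u \<in> A x}"

definition rho_monotone :: "real \<Rightarrow> ('a::real_inner \<Rightarrow> 'a set) \<Rightarrow> bool" where
  "rho_monotone \<rho> A \<longleftrightarrow>
     (\<forall>(x, u)\<in>gra A. \<forall>(y, v)\<in>gra A. inner (x - y) (u - v) \<ge> \<rho> * (norm (x - y))\<^sup>2)"

definition max_rho_monotone :: "real \<Rightarrow> ('a::real_inner \<Rightarrow> 'a set) \<Rightarrow> bool" where
  "max_rho_monotone \<rho> A \<longleftrightarrow> rho_monotone \<rho> A \<and>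
     (\<forall>B. rho_monotone \<rho> B \<and> gra A \<subseteq> gra B \<longrightarrow> gra B = gra A)"

definition op_scale :: "real \<Rightarrow> ('a::real_vector \<Rightarrow> 'a set) \<Rightarrow> ('a \<Rightarrow> 'a set)" where
  "op_scale \<gamma> A = (\<lambda>x. (\<lambda>u. \<gamma> *\<^sub>R u) ` A x)"

(* resolvent J_A = (Id + A)^{-1}, as a set-valued operator *)
definition resolvent :: "('a::real_vector \<Rightarrow> 'a set) \<Rightarrow> ('a \<Rightarrow> 'a set)" where
  "resolvent A = (\<lambda>x. {y. x - y \<in> A y})"

definition reflected_resolvent :: "('a::real_vector \<Rightarrow> 'a set) \<Rightarrow> ('a \<Rightarrow> 'a set)" where
  "reflected_resolvent A = (\<lambda>x. (\<lambda>y. 2 *\<^sub>R y - x) ` resolvent A x)"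

definition op_comp :: "('a \<Rightarrow> 'a set) \<Rightarrow> ('a \<Rightarrow> 'a set) \<Rightarrow> ('a \<Rightarrow> 'a set)" where
  "op_comp S R = (\<lambda>x. \<Union>z\<in>R x. S z)"

definition DR_op :: "real \<Rightarrow> ('a::real_vector \<Rightarrow> 'a set) \<Rightarrow> ('a \<Rightarrow> 'a set) \<Rightarrow> ('a \<Rightarrow> 'a set)" where
  "DR_op \<gamma> A B = (\<lambda>x. (\<lambda>z. (1/2) *\<^sub>R (x + z)) `
      op_comp (reflected_resolvent (op_scale \<gamma> B)) (reflected_resolvent (op_scale \<gamma> A)) x)"

definition single_valued_full_domain :: "('a \<Rightarrow> 'a set) \<Rightarrow> bool" where
  "single_valued_full_domain T \<longleftrightarrow> (\<forall>x. \<exists>!y. y \<in> T x)"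

definition nonexpansive :: "('a::real_normed_vector \<Rightarrow> 'a) \<Rightarrow> bool" where
  "nonexpansive N \<longleftrightarrow> (\<forall>x y. norm (N x - N y) \<le> norm (x - y))"

definition averaged :: "real \<Rightarrow> ('a::real_normed_vector \<Rightarrow> 'a) \<Rightarrow> bool" where
  "averaged \<alpha> T \<longleftrightarrow> 0 < \<alpha> \<and> \<alpha> < 1 \<and>
     (\<exists>N. nonexpansive N \<and> T = (\<lambda>x. (1 - \<alpha>) *\<^sub>R x + \<alpha> *\<^sub>R N x))"

end

theory Submission
  imports Defs
begin


lemma continuous_on_Max_image:
  fixes h :: "'p \<Rightarrow> 'a::topological_space \<Rightarrow> real"
  assumes "finite F" "F \<noteq> {}" "\<And>p. p \<in> F \<Longrightarrow> continuous_on S (h p)"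
  shows "continuous_on S (\<lambda>x. Max ((\<lambda>p. h p x) ` F))"
  using assms
proof (induction F rule: finite_ne_induct)
  case (singleton x) then show ?case by simp
next
  case (insert q F)
  have eq: "(\<lambda>x. Max ((\<lambda>p. h p x) ` insert q F)) = (\<lambda>x. max (h q x) (Max ((\<lambda>p. h p x) ` F)))"
    using insert by (simp add: Max_insert)
  have "continuous_on S (h q)" using insert.prems by simp
  moreover have "continuous_on S (\<lambda>x. Max ((\<lambda>p. h p x) ` F))" using insert.IH insert.prems by simp
  ultimately show ?case unfolding eq by (rule continuous_on_max)
qed

lemma finite_core_B:
  fixes J :: "('a::real_inner \<times> 'a) set"
  assumes fin: "finite J"
    and mono: "\<And>p q. p \<in> J \<Longrightarrow> q \<in> J \<Longrightarrow> inner (fst p - fst q) (snd p - snd q) \<ge> 0"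
    and nn: "\<And>p. p \<in> J \<Longrightarrow> \<beta> p \<ge> 0" and s1: "sum \<beta> J = 1"
  shows "(\<Sum>p\<in>J. \<beta> p * inner ((\<Sum>q\<in>J. \<beta> q *\<^sub>R ((1/2) *\<^sub>R (w + fst q - snd q))) - fst p)
            (w - (\<Sum>q\<in>J. \<beta> q *\<^sub>R ((1/2) *\<^sub>R (w + fst q - snd q))) - snd p)) \<ge> 0"
proof -
  define yb where "yb = (\<Sum>q\<in>J. \<beta> q *\<^sub>R fst q)"
  define ub where "ub = (\<Sum>q\<in>J. \<beta> q *\<^sub>R snd q)"
  define S where "S = (\<Sum>p\<in>J. \<beta> p * inner (fst p) (snd p))"
  define x where "x = (\<Sum>q\<in>J. \<beta> q *\<^sub>R ((1/2) *\<^sub>R (w + fst q - snd q)))"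
  have wsum: "(\<Sum>q\<in>J. \<beta> q *\<^sub>R w) = w" using s1 by (simp add: scaleR_sum_left[symmetric])
  have x_eq: "x = (1/2) *\<^sub>R (w + yb - ub)"
  proof -
    have "x = (1/2) *\<^sub>R (\<Sum>q\<in>J. \<beta> q *\<^sub>R (w + fst q - snd q))"
      unfolding x_def by (simp add: scaleR_sum_right)
    also have "(\<Sum>q\<in>J. \<beta> q *\<^sub>R (w + fst q - snd q)) = (\<Sum>q\<in>J. \<beta> q *\<^sub>R w) + yb - ub"
      unfolding yb_def ub_def by (simp add: scaleR_add_right scaleR_diff_right sum.distrib sum_subtractf)
    finally show ?thesis using wsum by simp
  qed
  have e1: "(\<Sum>p\<in>J. \<beta> p * inner (x - fst p) (w - x - snd p))
       = inner x (w - x) - inner x ub - inner yb (w - x) + S"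
  proof -
    have "(\<Sum>p\<in>J. \<beta> p * inner (x - fst p) (w - x - snd p))
       = (\<Sum>p\<in>J. \<beta> p * inner x (w - x) - inner x (\<beta> p *\<^sub>R snd p)
            - inner (\<beta> p *\<^sub>R fst p) (w - x) + \<beta> p * inner (fst p) (snd p))"
      by (rule sum.cong) (simp_all add: inner_simps algebra_simps)
    also have "\<dots> = inner x (w - x) - inner x ub - inner yb (w - x) + S"
      unfolding ub_def yb_def S_def
      by (simp add: sum.distrib sum_subtractf inner_sum_left inner_sum_right
           sum_distrib_right[symmetric] s1)
    finally show ?thesis .
  qed
  have e2: "inner x (w - x) - inner x ub - inner yb (w - x)
      = (1/4) * inner (w - yb - ub) (w - yb - ub) - inner yb ub"
    unfolding x_eq by (simp add: inner_simps inner_commute algebra_simps)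
  have dbl: "(\<Sum>p\<in>J. \<Sum>q\<in>J. \<beta> p * \<beta> q * inner (fst p - fst q) (snd p - snd q))
        = 2 * S - 2 * inner yb ub"
  proof -
    have sw: "(\<Sum>p\<in>J. \<Sum>q\<in>J. \<beta> q * (\<beta> p * inner (fst q) (snd p))) = (\<Sum>p\<in>J. \<Sum>q\<in>J. \<beta> q * (\<beta> p * inner (fst p) (snd q)))"
      by (subst sum.swap) (simp add: algebra_simps)
    have "(\<Sum>p\<in>J. \<Sum>q\<in>J. \<beta> p * \<beta> q * inner (fst p - fst q) (snd p - snd q))
      = (\<Sum>p\<in>J. \<Sum>q\<in>J. \<beta> q * (\<beta> p * inner (fst p) (snd p)) + \<beta> p * (\<beta> q * inner (fst q) (snd q))
            - inner (\<beta> p *\<^sub>R fst p) (\<beta> q *\<^sub>R snd q) - inner (\<beta> q *\<^sub>R fst q) (\<beta> p *\<^sub>R snd p))"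
      by (intro sum.cong refl) (simp add: inner_simps algebra_simps)
    also have "\<dots> = 2 * S - 2 * inner yb ub"
      unfolding S_def yb_def ub_def
      by (simp add: sum.distrib sum_subtractf inner_sum_left inner_sum_right
           sum_distrib_right[symmetric] sum_distrib_left[symmetric] s1 inner_commute sw)
    finally show ?thesis .
  qed
  have "(\<Sum>p\<in>J. \<Sum>q\<in>J. \<beta> p * \<beta> q * inner (fst p - fst q) (snd p - snd q)) \<ge> 0"
    by (intro sum_nonneg mult_nonneg_nonneg) (auto simp: nn mono)
  hence "S - inner yb ub \<ge> 0" using dbl by simp
  moreover have "inner (w - yb - ub) (w - yb - ub) \<ge> 0" by simp
  ultimately show ?thesis unfolding x_def[symmetric] using e1 e2 by linarith
qed



lemma finite_core:
  fixes F :: "('a::real_inner \<times> 'a) set" and w :: 'a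
  assumes fin: "finite F"
    and mono: "\<And>p q. p \<in> F \<Longrightarrow> q \<in> F \<Longrightarrow> inner (fst p - fst q) (snd p - snd q) \<ge> 0"
  shows "\<exists>x. \<forall>p\<in>F. inner (x - fst p) (w - x - snd p) \<ge> 0"
proof (cases "F = {}")
  case True then show ?thesis by simp
next
  case Fne: False
  define f where "f p x = - inner (x - fst p) (w - x - snd p)" for p x
  define a where "a p = (1/2) *\<^sub>R (w + fst p - snd p)" for p
  have expand: "f p (x + t *\<^sub>R d) = f p x + 2*t*inner (x - a p) d + t^2 * inner d d" for p x t d
    unfolding f_def a_def by (simp add: inner_simps inner_commute algebra_simps power2_eq_square)
  have contf: "continuous_on S (f p)" for p S unfolding f_def by (intro continuous_intros)
  define C where "C = convex hull (a ` F)"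
  define G where "G x = Max ((\<lambda>p. f p x) ` F)" for x
  have cC: "compact C" unfolding C_def using fin by (simp add: finite_imp_compact_convex_hull)
  have neC: "C \<noteq> {}" unfolding C_def using Fne by simp
  have convC: "convex C" unfolding C_def by simp
  have contG: "continuous_on C G" unfolding G_def
    by (rule continuous_on_Max_image[OF fin Fne contf])
  obtain xs where xs: "xs \<in> C" "\<And>z. z \<in> C \<Longrightarrow> G xs \<le> G z"
    using continuous_attains_inf[OF cC neC contG] by blast
  have fleG: "f p x \<le> G x" if "p \<in> F" for p x
    unfolding G_def using fin that by (intro Max_ge) auto
  have G0: "G xs \<le> 0"
  proof (rule ccontr)
    assume "\<not> G xs \<le> 0"
    hence mpos: "G xs > 0" by simp
    define m where "m = G xs"
    define J where "J = {p\<in>F. f p xs = m}"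
    have "m \<in> (\<lambda>p. f p xs) ` F" unfolding m_def G_def using fin Fne by (intro Max_in) auto
    hence Jne: "J \<noteq> {}" unfolding J_def by auto
    have JF: "J \<subseteq> F" unfolding J_def by auto
    have finJ: "finite J" using fin JF finite_subset by blast
    define K where "K = convex hull (a ` J)"
    have cK: "compact K" unfolding K_def using finJ by (simp add: finite_imp_compact_convex_hull)
    have neK: "K \<noteq> {}" unfolding K_def using Jne by simp
    have KC: "K \<subseteq> C" unfolding K_def C_def using JF by (intro hull_mono image_mono)
    have contd: "continuous_on K (\<lambda>z. dist xs z)" by (intro continuous_intros)
    obtain P where P: "P \<in> K" "\<And>z. z \<in> K \<Longrightarrow> dist xs P \<le> dist xs z"
      using continuous_attains_inf[OF cK neK contd] by blast
    have closest: "inner (xs - P) (q - P) \<le> 0" if "q \<in> K" for q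
      using any_closest_point_dot[of K P q xs] P that cK
      unfolding K_def by (simp add: compact_imp_closed)
    show False
    proof (cases "P = xs")
      case True
      have "P \<in> convex hull (\<Union>p\<in>J. {a p})" proof -
        have "(\<Union>p\<in>J. {a p}) = a ` J" by auto
        thus ?thesis using P(1) unfolding K_def by simp
      qed
      then obtain c s where cs: "\<forall>p\<in>J. c p \<ge> 0" "sum c J = 1" "\<forall>p\<in>J. s p \<in> {a p}"
          "P = (\<Sum>p\<in>J. c p *\<^sub>R s p)"
        using convex_hull_finite_union[OF finJ, of "\<lambda>p. {a p}"] by auto
      have Pc: "P = (\<Sum>q\<in>J. c q *\<^sub>R ((1/2) *\<^sub>R (w + fst q - snd q)))"
        using cs(3,4) unfolding a_def by simp
      have monoJ: "\<And>p q. p \<in> J \<Longrightarrow> q \<in> J \<Longrightarrow> inner (fst p - fst q) (snd p - snd q) \<ge> 0"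
        using mono JF by blast
      have "(\<Sum>p\<in>J. c p * inner (P - fst p) (w - P - snd p)) \<ge> 0"
        unfolding Pc by (rule finite_core_B[OF finJ monoJ]) (use cs in auto)
      moreover have "(\<Sum>p\<in>J. c p * inner (P - fst p) (w - P - snd p)) = (\<Sum>p\<in>J. c p * (- m))"
        by (rule sum.cong) (use True in \<open>auto simp: J_def f_def\<close>)
      moreover have "(\<Sum>p\<in>J. c p * (- m)) = - m" using cs(2) by (simp add: sum_negf sum_distrib_right[symmetric])
      ultimately show False using mpos m_def by simp
    next
      case False
      define d where "d = P - xs"
      have Dpos: "inner d d > 0" using False unfolding d_def by simp
      have act: "f p (xs + t *\<^sub>R d) < m" if "p \<in> J" "0 < t" "t \<le> 1" for p t
      proof -
        have "a p \<in> K" unfolding K_def using that(1) by (simp add: hull_inc)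
        hence "inner (xs - P) (a p - P) \<le> 0" by (rule closest)
        hence "inner (xs - a p) d \<le> - inner d d"
          unfolding d_def by (simp add: inner_simps inner_commute algebra_simps)
        moreover have "f p xs = m" using that unfolding J_def by simp
        ultimately have "f p (xs + t *\<^sub>R d) \<le> m - 2*t*inner d d + t^2 * inner d d"
          unfolding expand using that mult_left_mono[of "(xs - a p) \<bullet> d" "- (d \<bullet> d)" t] by simp
        moreover have "t^2 * inner d d < 2*t*inner d d"
          using that Dpos by (simp add: power2_eq_square)
        ultimately show ?thesis by simp
      qed
      have inact: "eventually (\<lambda>t. \<forall>p\<in>F - J. f p (xs + t *\<^sub>R d) < m) (at_right 0)"
      proof (rule eventually_ball_finite)
        show "finite (F - J)" using fin by simp
        show "\<forall>p\<in>F - J. eventually (\<lambda>t. f p (xs + t *\<^sub>R d) < m) (at_right 0)"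
        proof
          fix p assume p: "p \<in> F - J"
          hence lt: "f p xs < m" using fleG[of p xs] unfolding J_def m_def by auto
          have "((\<lambda>t::real. f p xs + 2*t*inner (xs - a p) d + t^2 * inner d d) \<longlongrightarrow>
                  f p xs + 2*0*inner (xs - a p) d + 0^2 * inner d d) (at_right 0)"
            by (intro tendsto_intros)
          hence "((\<lambda>t. f p (xs + t *\<^sub>R d)) \<longlongrightarrow> f p xs) (at_right 0)"
            unfolding expand by simp
          thus "eventually (\<lambda>t. f p (xs + t *\<^sub>R d) < m) (at_right 0)"
            using lt by (rule order_tendstoD)
        qed
      qed
      then obtain b where b: "b > 0" "\<And>t. 0 < t \<Longrightarrow> t < b \<Longrightarrow> \<forall>p\<in>F - J. f p (xs + t *\<^sub>R d) < m"
        unfolding eventually_at_right_field by auto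
      define t where "t = min (b/2) 1"
      have t: "0 < t" "t < b" "t \<le> 1" unfolding t_def using b by auto
      have all: "f p (xs + t *\<^sub>R d) < m" if "p \<in> F" for p
        using act[OF _ t(1,3)] b(2)[OF t(1,2)] that by (cases "p \<in> J") auto
      have "G (xs + t *\<^sub>R d) < m"
        unfolding G_def using fin Fne all by (simp add: Max_less_iff)
      moreover have "xs + t *\<^sub>R d \<in> C"
      proof -
        have "xs + t *\<^sub>R d = (1 - t) *\<^sub>R xs + t *\<^sub>R P" unfolding d_def by (simp add: algebra_simps)
        moreover have "P \<in> C" using P(1) KC by blast
        ultimately show ?thesis using convexD[OF convC xs(1), of P "1 - t" t] t by simp
      qed
      ultimately show False using xs(2) m_def by fastforce
    qed
  qed
  show ?thesis
  proof (intro exI ballI)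
    fix p assume "p \<in> F"
    thus "inner (xs - fst p) (w - xs - snd p) \<ge> 0" using fleG[of p xs] G0 unfolding f_def by simp
  qed
qed



lemma minty_core:
  fixes M :: "('a::{real_inner,complete_space} \<times> 'a) set" and w :: 'a
  assumes mono: "\<And>p q. p \<in> M \<Longrightarrow> q \<in> M \<Longrightarrow> inner (fst p - fst q) (snd p - snd q) \<ge> 0"
  shows "\<exists>x. \<forall>p\<in>M. inner (x - fst p) (w - x - snd p) \<ge> 0"
proof (cases "M = {}")
  case True then show ?thesis by simp
next
  case False
  then obtain p0 where p0: "p0 \<in> M" by auto
  define g where "g p x = inner (x - fst p) (w - x - snd p)" for p x
  define a where "a p = (1/2) *\<^sub>R (w + fst p - snd p)" for p
  define R where "R p = (norm (a p))^2 - inner (fst p) (w - snd p)" for p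
  have gball: "g p x = R p - (norm (x - a p))^2" for p x
    unfolding g_def R_def a_def
    by (simp add: power2_norm_eq_inner inner_simps inner_commute algebra_simps)
  have Rnn: "R p \<ge> 0" for p
    using gball[of p "fst p"] unfolding g_def by simp
  define r where "r p = sqrt (R p)" for p
  have K_iff: "g p x \<ge> 0 \<longleftrightarrow> norm (x - a p) \<le> r p" for p x
  proof
    assume "g p x \<ge> 0"
    hence "(norm (x - a p))^2 \<le> R p" using gball by simp
    thus "norm (x - a p) \<le> r p" unfolding r_def by (rule real_le_rsqrt)
  next
    assume "norm (x - a p) \<le> r p"
    hence "(norm (x - a p))^2 \<le> (r p)^2" by (simp add: power_mono)
    thus "g p x \<ge> 0" unfolding r_def using Rnn[of p] gball by simp
  qed
  define I where "I F = {x. \<forall>p\<in>F. g p x \<ge> 0}" for F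
  have Ine: "I F \<noteq> {}" if "finite F" "F \<subseteq> M" for F
  proof -
    have "\<exists>x. \<forall>p\<in>F. inner (x - fst p) (w - x - snd p) \<ge> 0"
      by (rule finite_core[OF that(1)]) (use mono that(2) in blast)
    thus ?thesis unfolding I_def g_def by auto
  qed
  have Imid: "(1/2) *\<^sub>R (x + y) \<in> I F" if "x \<in> I F" "y \<in> I F" for F x y
  proof -
    have "norm ((1/2) *\<^sub>R (x + y) - a p) \<le> r p" if "p \<in> F" for p
    proof -
      have "norm ((1/2) *\<^sub>R (x + y) - a p) = norm ((1/2) *\<^sub>R (x - a p) + (1/2) *\<^sub>R (y - a p))"
        by (simp add: algebra_simps flip: scaleR_add_left)
      also have "\<dots> \<le> (1/2) * norm (x - a p) + (1/2) * norm (y - a p)"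
        by (rule order_trans[OF norm_triangle_ineq]) simp
      also have "\<dots> \<le> r p"
      proof -
        have "norm (x - a p) \<le> r p" "norm (y - a p) \<le> r p"
          using \<open>x \<in> I F\<close> \<open>y \<in> I F\<close> that unfolding I_def K_iff by auto
        thus ?thesis by linarith
      qed
      finally show ?thesis .
    qed
    thus ?thesis unfolding I_def K_iff by auto
  qed
  have Ibound: "norm x \<le> norm (a p) + r p" if "x \<in> I F" "p \<in> F" for x p F
  proof -
    have "norm (x - a p) \<le> r p" using that unfolding I_def K_iff by auto
    thus ?thesis using norm_triangle_sub[of x "a p"] by (simp add: norm_minus_commute)
  qed
  have Ianti: "I G \<subseteq> I F" if "F \<subseteq> G" for F G using that unfolding I_def by auto
  define V where "V F = Inf ((\<lambda>x. (norm x)^2) ` I F)" for F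
  have bddb: "bdd_below ((\<lambda>x. (norm x)^2) ` I F)" for F by (rule bdd_belowI[of _ 0]) auto
  have Vle: "V F \<le> (norm x)^2" if "x \<in> I F" for F x
    unfolding V_def using that bddb by (intro cInf_lower) auto
  have Vless: "\<exists>x\<in>I F. (norm x)^2 < V F + e" if "finite F" "F \<subseteq> M" "e > 0" for F e
  proof -
    have *: "Inf ((\<lambda>x. (norm x)^2) ` I F) < V F + e" unfolding V_def using that by simp
    have "\<exists>y\<in>(\<lambda>x. (norm x)^2) ` I F. y < V F + e"
      using iffD1[OF cInf_less_iff[of "(\<lambda>x. (norm x)^2) ` I F" "V F + e"] *] Ine[OF that(1,2)] bddb[of F]
      by simp
    thus ?thesis by auto
  qed
  have Vmono: "V F \<le> V G" if "finite G" "G \<subseteq> M" "F \<subseteq> G" for F G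
    unfolding V_def using Ine[OF that(1,2)] bddb Ianti[OF that(3)]
    by (intro cInf_superset_mono) auto
  define Bd where "Bd = (norm (a p0) + r p0)^2"
  have Vbd: "V F \<le> Bd" if "finite F" "F \<subseteq> M" for F
  proof -
    have fi: "finite (insert p0 F)" "insert p0 F \<subseteq> M" using that p0 by auto
    obtain x where x: "x \<in> I (insert p0 F)" using Ine[OF fi] by auto
    have "V F \<le> V (insert p0 F)" using Vmono[OF fi] by auto
    also have "\<dots> \<le> (norm x)^2" by (rule Vle[OF x])
    also have "\<dots> \<le> Bd" unfolding Bd_def using Ibound[OF x, of p0] by (intro power_mono) auto
    finally show ?thesis .
  qed
  define Vs where "Vs = {V F | F. finite F \<and> F \<subseteq> M}"
  define S where "S = Sup Vs"
  have Vsne: "Vs \<noteq> {}" unfolding Vs_def by auto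
  have Vsbdd: "bdd_above Vs" unfolding Vs_def using Vbd by (intro bdd_aboveI[of _ Bd]) auto
  have VleS: "V F \<le> S" if "finite F" "F \<subseteq> M" for F
    unfolding S_def using that Vsbdd by (intro cSup_upper) (auto simp: Vs_def)
  define e where "e n = inverse (real (Suc n))" for n
  have epos: "e n > 0" for n unfolding e_def by simp
  have emono: "e m \<le> e n" if "n \<le> m" for n m unfolding e_def using that
    by (simp add: le_imp_inverse_le)
  have "\<exists>F. finite F \<and> F \<subseteq> M \<and> V F > S - e n" for n
  proof -
    have "S - e n < Sup Vs" unfolding S_def using epos[of n] by simp
    then obtain v where "v \<in> Vs" "S - e n < v" using less_cSup_iff[OF Vsne Vsbdd] by auto
    thus ?thesis unfolding Vs_def by auto
  qed
  then obtain Fn where Fn: "\<And>n. finite (Fn n) \<and> Fn n \<subseteq> M \<and> V (Fn n) > S - e n" by metis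
  define Gs where "Gs n = (\<Union>k\<le>n. Fn k)" for n
  have Gsfin: "finite (Gs n)" for n unfolding Gs_def using Fn by auto
  have GsM: "Gs n \<subseteq> M" for n unfolding Gs_def using Fn by auto
  have Gsmono: "Gs n \<subseteq> Gs m" if "n \<le> m" for n m unfolding Gs_def using that by (auto intro: order_trans)
  have VGs: "V (Gs n) > S - e n" for n
  proof -
    have "Fn n \<subseteq> Gs n" unfolding Gs_def by auto
    hence "V (Fn n) \<le> V (Gs n)" by (rule Vmono[OF Gsfin GsM])
    thus ?thesis using Fn[of n] by linarith
  qed
  have "\<exists>x\<in>I (Gs n). (norm x)^2 < V (Gs n) + e n" for n using Vless[OF Gsfin GsM epos] .
  then obtain xn where xn: "\<And>n. xn n \<in> I (Gs n) \<and> (norm (xn n))^2 < V (Gs n) + e n" by metis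
  have L: "(norm (xn n - y))^2 \<le> 6 * e n"
    if "finite H" "H \<subseteq> M" "Gs n \<subseteq> H" "y \<in> I H" "(norm y)^2 \<le> S + e n" for n H y
  proof -
    have y: "y \<in> I (Gs n)" using Ianti[OF that(3)] that(4) by auto
    have x: "xn n \<in> I (Gs n)" using xn by auto
    have "V (Gs n) \<le> (norm ((1/2) *\<^sub>R (xn n + y)))^2" by (rule Vle[OF Imid[OF x y]])
    moreover have "(norm (xn n - y))^2 = 2 * (norm (xn n))^2 + 2 * (norm y)^2 - 4 * (norm ((1/2) *\<^sub>R (xn n + y)))^2"
      by (simp add: power2_norm_eq_inner inner_simps inner_commute algebra_simps)
    moreover have "V (Gs n) \<le> S" by (rule VleS[OF Gsfin GsM])
    ultimately show ?thesis using xn[of n] VGs[of n] that(5) by linarith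
  qed
  have L2: "norm (xn n - xn m) < d" if "n \<le> m" "6 * e n < d^2" "d > 0" for n m d
  proof -
    have "(norm (xn n - xn m))^2 \<le> 6 * e n"
    proof (rule L[OF Gsfin GsM Gsmono[OF that(1)]])
      show "xn m \<in> I (Gs m)" using xn by auto
      have "(norm (xn m))^2 < V (Gs m) + e m" using xn by auto
      also have "\<dots> \<le> S + e n" using VleS[OF Gsfin GsM] emono[OF that(1)] by (intro add_mono) auto
      finally show "(norm (xn m))^2 \<le> S + e n" by simp
    qed
    hence "(norm (xn n - xn m))^2 < d^2" using that by simp
    thus ?thesis using that(3) by (simp add: power_less_imp_less_base)
  qed
  have "Cauchy xn"
  proof (rule metric_CauchyI)
    fix d :: real assume d: "d > 0"
    have "(d/2)^2/6 > 0" using d by simp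
    then obtain N where N: "inverse (real (Suc N)) < (d/2)^2/6" using reals_Archimedean by blast
    have e6: "6 * e N < (d/2)^2" using N unfolding e_def by simp
    have "\<forall>m\<ge>N. \<forall>n\<ge>N. dist (xn m) (xn n) < d"
    proof (intro allI impI)
      fix m n assume mn: "m \<ge> N" "n \<ge> N"
      have h1: "norm (xn N - xn m) < d/2" by (rule L2[OF mn(1) \<open>6 * e N < (d/2)^2\<close>]) (use d in simp)
      have h2: "norm (xn N - xn n) < d/2" by (rule L2[OF mn(2) \<open>6 * e N < (d/2)^2\<close>]) (use d in simp)
      have "dist (xn m) (xn n) \<le> dist (xn N) (xn m) + dist (xn N) (xn n)" by (metis dist_commute dist_triangle)
      thus "dist (xn m) (xn n) < d" using h1 h2 unfolding dist_norm by linarith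
    qed
    thus "\<exists>N. \<forall>m\<ge>N. \<forall>n\<ge>N. dist (xn m) (xn n) < d" by blast
  qed
  then obtain xl where xl: "xn \<longlonglongrightarrow> xl" using Cauchy_convergent convergent_def by blast
  have "g p xl \<ge> 0" if p: "p \<in> M" for p
  proof -
    have bnd: "norm (xn n - a p) \<le> r p + sqrt (6 * e n)" for n
    proof -
      define H where "H = insert p (Gs n)"
      have Hf: "finite H" "H \<subseteq> M" "Gs n \<subseteq> H" unfolding H_def using Gsfin GsM p by auto
      obtain y where y: "y \<in> I H" "(norm y)^2 < V H + e n" using Vless[OF Hf(1,2) epos] by auto
      have "(norm y)^2 \<le> S + e n" using y(2) VleS[OF Hf(1,2)] by simp
      hence "(norm (xn n - y))^2 \<le> 6 * e n" using L[OF Hf y(1)] by simp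
      hence "norm (xn n - y) \<le> sqrt (6 * e n)" by (rule real_le_rsqrt)
      moreover have "norm (y - a p) \<le> r p" using y(1) unfolding H_def I_def K_iff by auto
      moreover have "norm (xn n - a p) \<le> norm (xn n - y) + norm (y - a p)"
        by (rule norm_diff_triangle_le[of _ y]) simp_all
      ultimately show ?thesis by simp
    qed
    have l1: "(\<lambda>n. norm (xn n - a p)) \<longlonglongrightarrow> norm (xl - a p)" by (intro tendsto_intros xl)
    have "(\<lambda>n. r p + sqrt (6 * e n)) \<longlonglongrightarrow> r p + sqrt (6 * 0)"
      unfolding e_def by (intro tendsto_intros LIMSEQ_inverse_real_of_nat)
    hence l2: "(\<lambda>n. r p + sqrt (6 * e n)) \<longlonglongrightarrow> r p" by simp
    have "norm (xl - a p) \<le> r p" using LIMSEQ_le[OF l1 l2] bnd by blast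
    thus ?thesis using K_iff by simp
  qed
  thus ?thesis unfolding g_def by blast
qed



lemma rho_monoD:
  assumes "rho_monotone \<rho> A" "u \<in> A x" "v \<in> A y"
  shows "inner (x - y) (u - v) \<ge> \<rho> * (norm (x - y))^2"
  using assms unfolding rho_monotone_def gra_def by fastforce

lemma max_rho_monoD:
  fixes A :: "'a::real_inner \<Rightarrow> 'a set"
  assumes mx: "max_rho_monotone \<rho> A"
    and rel: "\<And>y v. v \<in> A y \<Longrightarrow> inner (x - y) (u - v) \<ge> \<rho> * (norm (x - y))^2"
  shows "u \<in> A x"
proof -
  have rm: "rho_monotone \<rho> A" using mx unfolding max_rho_monotone_def by simp
  define B where "B t = (if t = x then insert u (A t) else A t)" for t
  have graB: "gra B = insert (x, u) (gra A)" unfolding B_def gra_def by (auto split: if_splits)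
  have "rho_monotone \<rho> B"
    unfolding rho_monotone_def graB
  proof (intro ballI, clarify)
    fix x1 u1 x2 u2 assume h1: "(x1, u1) \<in> insert (x, u) (gra A)" and h2: "(x2, u2) \<in> insert (x, u) (gra A)"
    show "\<rho> * (norm (x1 - x2))^2 \<le> inner (x1 - x2) (u1 - u2)"
    proof (cases "(x1, u1) = (x, u)")
      case True
      show ?thesis
      proof (cases "(x2, u2) = (x, u)")
        case True with \<open>(x1, u1) = (x, u)\<close> show ?thesis by simp
      next
        case False
        hence "u2 \<in> A x2" using h2 unfolding gra_def by auto
        thus ?thesis using rel[of u2 x2] True by simp
      qed
    next
      case False
      hence a1: "u1 \<in> A x1" using h1 unfolding gra_def by auto
      show ?thesis
      proof (cases "(x2, u2) = (x, u)")
        case True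
        have "\<rho> * (norm (x - x1))^2 \<le> inner (x - x1) (u - u1)" using rel[OF a1] .
        moreover have "inner (x - x1) (u - u1) = inner (x1 - x) (u1 - u)"
          by (simp add: inner_simps algebra_simps)
        moreover have "norm (x - x1) = norm (x1 - x)" by (rule norm_minus_commute)
        ultimately show ?thesis using True by simp
      next
        case False
        hence "u2 \<in> A x2" using h2 unfolding gra_def by auto
        thus ?thesis using rho_monoD[OF rm a1] by simp
      qed
    qed
  qed
  moreover have "gra A \<subseteq> gra B" unfolding graB by auto
  ultimately have "gra B = gra A" using mx unfolding max_rho_monotone_def by blast
  hence "(x, u) \<in> gra A" unfolding graB by auto
  thus ?thesis unfolding gra_def by simp
qed

lemma res_iff: "y \<in> resolvent (op_scale \<gamma> A) x \<longleftrightarrow> (\<exists>v\<in>A y. x - y = \<gamma> *\<^sub>R v)"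
  unfolding resolvent_def op_scale_def by auto

lemma res_firm:
  assumes rm: "rho_monotone \<rho> A" and "y1 \<in> resolvent (op_scale \<gamma> A) x1" "y2 \<in> resolvent (op_scale \<gamma> A) x2"
    and g: "\<gamma> > 0"
  shows "inner (y1 - y2) ((x1 - y1) - (x2 - y2)) \<ge> \<gamma> * \<rho> * (norm (y1 - y2))^2"
proof -
  obtain v1 v2 where v: "v1 \<in> A y1" "x1 - y1 = \<gamma> *\<^sub>R v1" "v2 \<in> A y2" "x2 - y2 = \<gamma> *\<^sub>R v2"
    using assms(2,3) unfolding res_iff by blast
  have "inner (y1 - y2) ((x1 - y1) - (x2 - y2)) = \<gamma> * inner (y1 - y2) (v1 - v2)"
    unfolding v(2,4) by (simp add: inner_simps algebra_simps)
  moreover have "\<gamma> * inner (y1 - y2) (v1 - v2) \<ge> \<gamma> * (\<rho> * (norm (y1 - y2))^2)"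
    using rho_monoD[OF rm v(1,3)] g by (intro mult_left_mono) auto
  ultimately show ?thesis by simp
qed

lemma res_unique:
  fixes A :: "'a::{real_inner,complete_space} \<Rightarrow> 'a set"
  assumes mx: "max_rho_monotone \<rho> A" and g: "\<gamma> > 0" and k: "1 + \<gamma> * \<rho> > 0"
  shows "\<exists>!y. y \<in> resolvent (op_scale \<gamma> A) z"
proof -
  have rm: "rho_monotone \<rho> A" using mx unfolding max_rho_monotone_def by simp
  define \<kappa> where "\<kappa> = 1 + \<gamma> * \<rho>"
  have kp: "\<kappa> > 0" using k unfolding \<kappa>_def by simp
  define M where "M = {(y, (1/\<kappa>) *\<^sub>R (\<gamma> *\<^sub>R v - (\<gamma> * \<rho>) *\<^sub>R y)) | y v. v \<in> A y}"
  have monoM: "inner (fst p - fst q) (snd p - snd q) \<ge> 0" if pM: "p \<in> M" and qM: "q \<in> M" for p q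
  proof -
    obtain y v where pq1: "p = (y, (1/\<kappa>) *\<^sub>R (\<gamma> *\<^sub>R v - (\<gamma> * \<rho>) *\<^sub>R y))" "v \<in> A y"
      using pM unfolding M_def by blast
    obtain y' v' where pq2: "q = (y', (1/\<kappa>) *\<^sub>R (\<gamma> *\<^sub>R v' - (\<gamma> * \<rho>) *\<^sub>R y'))" "v' \<in> A y'"
      using qM unfolding M_def by blast
    note pq = pq1 pq2
    have e: "inner (fst p - fst q) (snd p - snd q)
        = (1/\<kappa>) * (\<gamma> * inner (y - y') (v - v') - \<gamma> * \<rho> * (norm (y - y'))^2)"
      unfolding pq by (simp add: inner_simps algebra_simps power2_norm_eq_inner)
    have "\<gamma> * inner (y - y') (v - v') \<ge> \<gamma> * (\<rho> * (norm (y - y'))^2)"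
      using rho_monoD[OF rm pq(2,4)] g by (intro mult_left_mono) auto
    thus ?thesis unfolding e using kp by simp
  qed
  obtain x where x: "\<forall>p\<in>M. inner (x - fst p) ((1/\<kappa>) *\<^sub>R z - x - snd p) \<ge> 0"
    using minty_core[OF monoM] by blast
  define u where "u = (1/\<gamma>) *\<^sub>R (z - x)"
  have "u \<in> A x"
  proof (rule max_rho_monoD[OF mx])
    fix y v assume v: "v \<in> A y"
    have "(y, (1/\<kappa>) *\<^sub>R (\<gamma> *\<^sub>R v - (\<gamma> * \<rho>) *\<^sub>R y)) \<in> M" unfolding M_def using v by blast
    hence h: "inner (x - y) ((1/\<kappa>) *\<^sub>R z - x - (1/\<kappa>) *\<^sub>R (\<gamma> *\<^sub>R v - (\<gamma> * \<rho>) *\<^sub>R y)) \<ge> 0"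
      using x by auto
    have zx: "z - x = \<gamma> *\<^sub>R u" unfolding u_def using g by simp
    have "inner (x - y) ((1/\<kappa>) *\<^sub>R z - x - (1/\<kappa>) *\<^sub>R (\<gamma> *\<^sub>R v - (\<gamma> * \<rho>) *\<^sub>R y))
       = (1/\<kappa>) * inner (x - y) (z - \<kappa> *\<^sub>R x - \<gamma> *\<^sub>R v + (\<gamma> * \<rho>) *\<^sub>R y)"
      using kp by (simp add: inner_simps algebra_simps)
    also have "z - \<kappa> *\<^sub>R x - \<gamma> *\<^sub>R v + (\<gamma> * \<rho>) *\<^sub>R y = \<gamma> *\<^sub>R (u - v) - (\<gamma> * \<rho>) *\<^sub>R (x - y)"
      unfolding \<kappa>_def using zx by (simp add: algebra_simps)
    also have "inner (x - y) (\<gamma> *\<^sub>R (u - v) - (\<gamma> * \<rho>) *\<^sub>R (x - y))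
        = \<gamma> * (inner (x - y) (u - v) - \<rho> * (norm (x - y))^2)"
      by (simp add: inner_simps algebra_simps power2_norm_eq_inner)
    finally have hY: "0 \<le> (1/\<kappa>) * (\<gamma> * (inner (x - y) (u - v) - \<rho> * (norm (x - y))^2))"
      (is "0 \<le> _ * ?Y") using h by simp
    have "0 \<le> \<kappa> * ((1/\<kappa>) * ?Y)" by (rule mult_nonneg_nonneg[OF _ hY]) (use kp in simp)
    hence "\<gamma> * (inner (x - y) (u - v) - \<rho> * (norm (x - y))^2) \<ge> 0" using kp by simp
    thus "inner (x - y) (u - v) \<ge> \<rho> * (norm (x - y))^2" using g by (simp add: zero_le_mult_iff)
  qed
  hence ex: "x \<in> resolvent (op_scale \<gamma> A) z"
    unfolding res_iff u_def using g by (intro bexI[of _ u]) (auto simp: u_def)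
  have uniq: "y1 = y2" if "y1 \<in> resolvent (op_scale \<gamma> A) z" "y2 \<in> resolvent (op_scale \<gamma> A) z" for y1 y2
  proof -
    have "inner (y1 - y2) ((z - y1) - (z - y2)) \<ge> \<gamma> * \<rho> * (norm (y1 - y2))^2"
      by (rule res_firm[OF rm that g])
    moreover have "inner (y1 - y2) ((z - y1) - (z - y2)) = - ((norm (y1 - y2))^2)"
      by (simp add: inner_simps algebra_simps power2_norm_eq_inner)
    ultimately have "(1 + \<gamma> * \<rho>) * (norm (y1 - y2))^2 \<le> 0" by (simp add: algebra_simps)
    hence "(norm (y1 - y2))^2 \<le> 0" using k by (simp add: mult_le_0_iff)
    thus ?thesis by simp
  qed
  show ?thesis using ex uniq by blast
qed



lemma DR_generic:
  fixes A B :: "'a::{real_inner,complete_space} \<Rightarrow> 'a set"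
  assumes mA: "max_rho_monotone \<rho>a A" and mB: "max_rho_monotone \<rho>b B" and g: "\<gamma> > 0"
    and ka: "1 + \<gamma> * \<rho>a > 0" and kb: "1 + \<gamma> * \<rho>b > 0" and al: "0 < \<alpha>" "\<alpha> < 1"
    and key: "\<And>dx da dc :: 'a. inner da dx \<ge> (1 + \<gamma> * \<rho>a) * (norm da)^2 \<Longrightarrow>
         inner dc (2 *\<^sub>R da - dx) \<ge> (1 + \<gamma> * \<rho>b) * (norm dc)^2 \<Longrightarrow>
         (norm (da - dc))^2 \<le> 2 * \<alpha> * inner dx (da - dc)"
  shows "single_valued_full_domain (DR_op \<gamma> A B) \<and> averaged \<alpha> (\<lambda>x. THE y. y \<in> DR_op \<gamma> A B x)"
proof -
  have rA: "rho_monotone \<rho>a A" using mA unfolding max_rho_monotone_def by simp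
  have rB: "rho_monotone \<rho>b B" using mB unfolding max_rho_monotone_def by simp
  define JA where "JA x = (THE y. y \<in> resolvent (op_scale \<gamma> A) x)" for x
  define JB where "JB x = (THE y. y \<in> resolvent (op_scale \<gamma> B) x)" for x
  have JAin: "JA x \<in> resolvent (op_scale \<gamma> A) x" for x
    unfolding JA_def by (rule theI'[OF res_unique[OF mA g ka]])
  have JBin: "JB x \<in> resolvent (op_scale \<gamma> B) x" for x
    unfolding JB_def by (rule theI'[OF res_unique[OF mB g kb]])
  have resA: "resolvent (op_scale \<gamma> A) x = {JA x}" for x
    using res_unique[OF mA g ka, of x] JAin[of x] by blast
  have resB: "resolvent (op_scale \<gamma> B) x = {JB x}" for x
    using res_unique[OF mB g kb, of x] JBin[of x] by blast
  have DR: "DR_op \<gamma> A B x = {x - JA x + JB (2 *\<^sub>R JA x - x)}" for x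
  proof -
    have "DR_op \<gamma> A B x = {(1/2) *\<^sub>R (x + (2 *\<^sub>R JB (2 *\<^sub>R JA x - x) - (2 *\<^sub>R JA x - x)))}"
      unfolding DR_op_def op_comp_def reflected_resolvent_def resA resB by simp
    also have "(1/2) *\<^sub>R (x + (2 *\<^sub>R JB (2 *\<^sub>R JA x - x) - (2 *\<^sub>R JA x - x))) = x - JA x + JB (2 *\<^sub>R JA x - x)"
      by (simp add: algebra_simps flip: scaleR_add_left)
    finally show ?thesis .
  qed
  have sv: "single_valued_full_domain (DR_op \<gamma> A B)"
    unfolding single_valued_full_domain_def DR by simp
  have Teq: "(\<lambda>x. THE y. y \<in> DR_op \<gamma> A B x) = (\<lambda>x. x - JA x + JB (2 *\<^sub>R JA x - x))"
    unfolding DR by simp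
  define N where "N x = x - (1/\<alpha>) *\<^sub>R (JA x - JB (2 *\<^sub>R JA x - x))" for x
  have ne: "nonexpansive N"
    unfolding nonexpansive_def
  proof (intro allI)
    fix x y :: 'a
    define dx where "dx = x - y"
    define da where "da = JA x - JA y"
    define dc where "dc = JB (2 *\<^sub>R JA x - x) - JB (2 *\<^sub>R JA y - y)"
    have fA: "inner da ((x - JA x) - (y - JA y)) \<ge> \<gamma> * \<rho>a * (norm da)^2"
      unfolding da_def by (rule res_firm[OF rA JAin JAin g])
    have "inner da ((x - JA x) - (y - JA y)) = inner da dx - (norm da)^2"
      unfolding da_def dx_def by (simp add: inner_simps algebra_simps power2_norm_eq_inner)
    hence h1: "inner da dx \<ge> (1 + \<gamma> * \<rho>a) * (norm da)^2" using fA by (simp add: algebra_simps)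
    have fB: "inner dc (((2 *\<^sub>R JA x - x) - JB (2 *\<^sub>R JA x - x)) - ((2 *\<^sub>R JA y - y) - JB (2 *\<^sub>R JA y - y)))
        \<ge> \<gamma> * \<rho>b * (norm dc)^2"
      unfolding dc_def by (rule res_firm[OF rB JBin JBin g])
    have "inner dc (((2 *\<^sub>R JA x - x) - JB (2 *\<^sub>R JA x - x)) - ((2 *\<^sub>R JA y - y) - JB (2 *\<^sub>R JA y - y)))
        = inner dc (2 *\<^sub>R da - dx) - (norm dc)^2"
      unfolding da_def dx_def dc_def by (simp add: inner_simps algebra_simps power2_norm_eq_inner)
    hence h2: "inner dc (2 *\<^sub>R da - dx) \<ge> (1 + \<gamma> * \<rho>b) * (norm dc)^2" using fB by (simp add: algebra_simps)
    define q where "q = da - dc"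
    have k: "(norm q)^2 \<le> 2 * \<alpha> * inner dx q" unfolding q_def by (rule key[OF h1 h2])
    have Nd: "N x - N y = dx - (1/\<alpha>) *\<^sub>R q"
      unfolding N_def dx_def q_def da_def dc_def by (simp add: algebra_simps)
    have "(norm (N x - N y))^2 = (norm dx)^2 - 2 * (1/\<alpha>) * inner dx q + (1/\<alpha>)^2 * (norm q)^2"
      unfolding Nd power2_norm_eq_inner by (simp add: inner_simps inner_commute algebra_simps power2_eq_square)
    also have "(1/\<alpha>)^2 * (norm q)^2 \<le> (1/\<alpha>)^2 * (2 * \<alpha> * inner dx q)"
      using k by (intro mult_left_mono) auto
    also have "(1/\<alpha>)^2 * (2 * \<alpha> * inner dx q) = 2 * (1/\<alpha>) * inner dx q"
      using al by (simp add: power2_eq_square field_simps)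
    finally have "(norm (N x - N y))^2 \<le> (norm dx)^2" by simp
    thus "norm (N x - N y) \<le> norm (x - y)" unfolding dx_def by (rule power2_le_imp_le) simp
  qed
  have av: "averaged \<alpha> (\<lambda>x. THE y. y \<in> DR_op \<gamma> A B x)"
    unfolding averaged_def Teq
  proof (intro conjI exI[of _ N])
    show "0 < \<alpha>" "\<alpha> < 1" "nonexpansive N" using al ne by auto
    show "(\<lambda>x. x - JA x + JB (2 *\<^sub>R JA x - x)) = (\<lambda>x. (1 - \<alpha>) *\<^sub>R x + \<alpha> *\<^sub>R N x)"
      unfolding N_def using al by (auto simp: algebra_simps)
  qed
  show ?thesis using sv av by simp
qed

lemma key_real:
  fixes D K s2 t2 p X1 X2 a1 b1 \<gamma> \<mu> \<omega> :: real
  assumes D: "D > 0" and K: "K > 0"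
    and h1: "X1 \<ge> a1 * s2" and h2: "2 * p - X2 \<ge> b1 * t2"
    and H: "D * a1 * s2 + D * b1 * t2 - 2 * D * p - K * (s2 - 2 * p + t2) \<ge> 0"
  shows "s2 - 2 * p + t2 \<le> (D / K) * (X1 - X2)"
proof -
  have "D * X1 \<ge> D * (a1 * s2)" using h1 D by (intro mult_left_mono) auto
  moreover have "D * (2 * p - X2) \<ge> D * (b1 * t2)" using h2 D by (intro mult_left_mono) auto
  ultimately have "K * (s2 - 2 * p + t2) \<le> D * (X1 - X2)" using H by (simp add: algebra_simps)
  thus ?thesis using K by (simp add: field_simps)
qed



lemma key_vec:
  fixes da dc dx :: "'a::real_inner"
  assumes D: "D > 0" and K: "K > 0" and g: "\<gamma> \<ge> 0"
    and h1: "inner da dx \<ge> a1 * (norm da)^2" and h2: "inner dc (2 *\<^sub>R da - dx) \<ge> b1 * (norm dc)^2"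
    and H: "\<And>ss tt p. D*a1* ss + D*b1* tt - 2*D* p - K*(ss - 2* p + tt) = \<gamma>*(c1^2* ss - 2*c1*c2* p + c2^2* tt)"
  shows "(norm (da - dc))^2 \<le> 2 * (D / (2 * K)) * inner dx (da - dc)"
proof -
  define ss where "ss = inner da da"
  define tt where "tt = inner dc dc"
  define p where "p = inner da dc"
  define X1 where "X1 = inner da dx"
  define X2 where "X2 = inner dc dx"
  have sq: "(norm (c1 *\<^sub>R da - c2 *\<^sub>R dc))^2 = c1^2* ss - 2*c1*c2* p + c2^2* tt"
    unfolding ss_def tt_def p_def power2_norm_eq_inner
    by (simp add: inner_simps inner_commute algebra_simps power2_eq_square)
  have "\<gamma>*(c1^2* ss - 2*c1*c2* p + c2^2* tt) \<ge> 0" using g sq[symmetric] by simp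
  hence HH: "D*a1* ss + D*b1* tt - 2*D* p - K*(ss - 2* p + tt) \<ge> 0" using H by simp
  have h1': "X1 \<ge> a1 * ss" using h1 unfolding X1_def ss_def by (simp add: power2_norm_eq_inner)
  have h2': "2 * p - X2 \<ge> b1 * tt" using h2 unfolding X2_def tt_def p_def
    by (simp add: power2_norm_eq_inner inner_simps inner_commute)
  have "ss - 2 * p + tt \<le> (D / K) * (X1 - X2)" by (rule key_real[OF D K h1' h2' HH])
  moreover have "(norm (da - dc))^2 = ss - 2 * p + tt"
    unfolding ss_def tt_def p_def power2_norm_eq_inner by (simp add: inner_simps inner_commute)
  moreover have "inner dx (da - dc) = X1 - X2" unfolding X1_def X2_def by (simp add: inner_simps inner_commute)
  moreover have "2 * (D / (2 * K)) = D / K" by simp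
  ultimately show ?thesis by simp
qed

theorem mainTheorem12:
  fixes A B :: "'a::{real_inner, complete_space} \<Rightarrow> 'a set"
    and \<mu> \<omega> \<gamma> \<alpha> :: real
  assumes "\<mu> > \<omega>" and "\<omega> \<ge> 0"
    and "\<gamma> > 0" and "\<omega> = 0 \<or> \<gamma> < (\<mu> - \<omega>) / (2 * \<mu> * \<omega>)"
    and "(max_rho_monotone (-\<omega>) A \<and> max_rho_monotone \<mu> B) \<or>
         (max_rho_monotone \<mu> A \<and> max_rho_monotone (-\<omega>) B)"
    and "\<alpha> = (\<mu> - \<omega>) / (2 * (\<mu> - \<omega> - \<gamma> * \<mu> * \<omega>))"
  shows "single_valued_full_domain (DR_op \<gamma> A B) \<and> 0 < \<alpha> \<and> \<alpha> < 1 \<and>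
         averaged \<alpha> (\<lambda>x. THE y. y \<in> DR_op \<gamma> A B x)"
proof -
  note as = assms
  have mu0: "\<mu> > 0" using as(1,2) by simp
  define D where "D = \<mu> - \<omega>"
  have D0: "D > 0" unfolding D_def using as(1) by simp
  have E: "2 * \<gamma> * \<mu> * \<omega> < D"
  proof (cases "\<omega> = 0")
    case True thus ?thesis using D0 by simp
  next
    case False
    hence w0: "\<omega> > 0" using as(2) by simp
    hence "2 * \<mu> * \<omega> > 0" using mu0 by simp
    moreover have "\<gamma> < D / (2 * \<mu> * \<omega>)" using as(4) False unfolding D_def by simp
    ultimately have "\<gamma> * (2 * \<mu> * \<omega>) < D" by (simp add: less_divide_eq)
    thus ?thesis by (simp add: algebra_simps)
  qed
  have gmw: "\<gamma> * \<mu> * \<omega> \<ge> 0" using as(2,3) mu0 by simp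
  define K where "K = D - \<gamma> * \<mu> * \<omega>"
  have K0: "K > 0" unfolding K_def using E gmw by simp
  have aeq: "\<alpha> = D / (2 * K)" unfolding K_def D_def using as(6) by simp
  have a0: "0 < \<alpha>" unfolding aeq using D0 K0 by simp
  have a1: "\<alpha> < 1" unfolding aeq using D0 K0 E unfolding K_def by (simp add: divide_less_eq)
  have "\<mu> * (2 * (\<gamma> * \<omega>)) < \<mu> * 1" using E unfolding D_def using as(2) by (simp add: algebra_simps)
  hence "2 * (\<gamma> * \<omega>) < 1" using mu0 by (simp only: mult_less_cancel_left_pos)
  hence kw: "1 + \<gamma> * (- \<omega>) > 0" by simp
  have kmu: "1 + \<gamma> * \<mu> > 0" using as(3) mu0 by (simp add: add_pos_pos)
  have g0: "\<gamma> \<ge> 0" using as(3) by simp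
  from as(5) show ?thesis
  proof
    assume h: "max_rho_monotone (-\<omega>) A \<and> max_rho_monotone \<mu> B"
    have "single_valued_full_domain (DR_op \<gamma> A B) \<and> averaged \<alpha> (\<lambda>x. THE y. y \<in> DR_op \<gamma> A B x)"
    proof (rule DR_generic[OF conjunct1[OF h] conjunct2[OF h] as(3) kw kmu a0 a1])
      fix dx da dc :: 'a
      assume "inner da dx \<ge> (1 + \<gamma> * (- \<omega>)) * (norm da)^2" "inner dc (2 *\<^sub>R da - dx) \<ge> (1 + \<gamma> * \<mu>) * (norm dc)^2"
      from key_vec[OF D0 K0 g0 this, of \<omega> \<mu>]
      show "(norm (da - dc))^2 \<le> 2 * \<alpha> * inner dx (da - dc)"
        unfolding aeq by (simp add: D_def K_def algebra_simps power2_eq_square)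
    qed
    thus ?thesis using a0 a1 by simp
  next
    assume h: "max_rho_monotone \<mu> A \<and> max_rho_monotone (-\<omega>) B"
    have "single_valued_full_domain (DR_op \<gamma> A B) \<and> averaged \<alpha> (\<lambda>x. THE y. y \<in> DR_op \<gamma> A B x)"
    proof (rule DR_generic[OF conjunct1[OF h] conjunct2[OF h] as(3) kmu kw a0 a1])
      fix dx da dc :: 'a
      assume "inner da dx \<ge> (1 + \<gamma> * \<mu>) * (norm da)^2" "inner dc (2 *\<^sub>R da - dx) \<ge> (1 + \<gamma> * (- \<omega>)) * (norm dc)^2"
      from key_vec[OF D0 K0 g0 this, of \<mu> \<omega>]
      show "(norm (da - dc))^2 \<le> 2 * \<alpha> * inner dx (da - dc)"
        unfolding aeq by (simp add: D_def K_def algebra_simps power2_eq_square)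
    qed
    thus ?thesis using a0 a1 by simp
  qed
qed


end
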